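(* Let $k\in\mathbb{R}_{\ge0}$, $(A,B,C)$ a $k$-initial triple, $(a,b,c)$ a $0$-initial triple, and $\mathbf{w}=[w_1,w_2,\dots]$ an infinite reduced sequence in which each of $1,2,3$ appears infinitely many times. For $j\ge0$ let $(X_j,Y_j,Z_j)=\mathcal{M}_k^{\mathbf{w}_j}(A,B,C)$, $(x_j,y_j,z_j)=\mathcal{M}^{\mathbf{w}_j}(a,b,c)$ and $(l_j,m_j,n_j)=(X_j/x_j,Y_j/y_j,Z_j/z_j)$. Then the sequence $\{\max(l_j,m_j,n_j)\}_{j\ge1}$ is bounded above.
   Context: For $k\in\mathbb{R}_{\ge0}$: $\mathcal{M}_{1;k}(X,Y,Z)=(k+Y+Z,Y,Z)$, $\mathcal{M}_{2;k}(X,Y,Z)=(X,k+X+Z,Z)$, $\mathcal{M}_{3;k}(X,Y,Z)=(X,Y,k+X+Y)$ on $\mathbb{R}_+^3$, $\mathcal{M}_i=\mathcal{M}_{i;0}$. A $k$-initial triple is $(A,B,C)\in\mathbb{R}_+^3$ with $A\ne B+C+k$, $B\ne A+C+k$, $C\ne A+B+k$. A sequence with entries in $\{1,2,3\}$ is reduced if consecutive entries differ; $\mathbf{w}_j=[w_1,\dots,w_j]$ ($\mathbf{w}_0$ empty), $\mathcal{M}_k^{\mathbf{w}_j}=\mathcal{M}_{w_j;k}\circ\cdots\circ\mathcal{M}_{w_1;k}$, $\mathcal{M}^{\mathbf{w}_j}=\mathcal{M}_0^{\mathbf{w}_j}$. *)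

theory Defs
  imports Complex_Main "HOL-Library.Infinite_Set"
begin

type_synonym triple = "real \<times> real \<times> real"

fun Mk :: "real \<Rightarrow> nat \<Rightarrow> triple \<Rightarrow> triple" where
  "Mk k i (X, Y, Z) =
     (if i = 1 then (k + Y + Z, Y, Z)
      else if i = 2 then (X, k + X + Z, Z)
      else if i = 3 then (X, Y, k + X + Y)
      else (X, Y, Z))"

text \<open>Composition along the prefix w_1..w_j of a sequence; the paper's w_{i+1} is w i here.\<close>
fun Mseq :: "real \<Rightarrow> (nat \<Rightarrow> nat) \<Rightarrow> nat \<Rightarrow> triple \<Rightarrow> triple" where
  "Mseq k w 0 t = t"
| "Mseq k w (Suc j) t = Mk k (w j) (Mseq k w j t)"

definition k_initial :: "real \<Rightarrow> triple \<Rightarrow> bool" where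
  "k_initial k t = (case t of (A, B, C) \<Rightarrow>
     A > 0 \<and> B > 0 \<and> C > 0 \<and>
     A \<noteq> B + C + k \<and> B \<noteq> A + C + k \<and> C \<noteq> A + B + k)"

definition reduced_inf :: "(nat \<Rightarrow> nat) \<Rightarrow> bool" where
  "reduced_inf w = ((\<forall>j. w j \<in> {1,2,3}) \<and> (\<forall>j. w j \<noteq> w (Suc j)))"

end

theory Submission
  imports Defs
begin

lemma key:
  fixes k L A B C a b c :: real
  assumes k: "k \<ge> 0" and pos: "a > 0" "b > 0" "c > 0"
    and i: "A + k \<le> L * a" "B + k \<le> L * b" "C + k \<le> L * c"
  shows "case Mseq k w j (A, B, C) of (X, Y, Z) \<Rightarrow>
     case Mseq 0 w j (a, b, c) of (x, y, z) \<Rightarrow>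
       X + k \<le> L * x \<and> Y + k \<le> L * y \<and> Z + k \<le> L * z \<and> x > 0 \<and> y > 0 \<and> z > 0"
proof (induction j)
  case 0
  then show ?case using pos i by simp
next
  case (Suc j)
  obtain X Y Z where e1: "Mseq k w j (A, B, C) = (X, Y, Z)" by (metis prod_cases3)
  obtain x y z where e2: "Mseq 0 w j (a, b, c) = (x, y, z)" by (metis prod_cases3)
  from Suc have h: "X + k \<le> L * x" "Y + k \<le> L * y" "Z + k \<le> L * z" "x > 0" "y > 0" "z > 0"
    using e1 e2 by auto
  show ?case using h k e1 e2 by (auto simp: algebra_simps)
qed

theorem proposition5p3:
  fixes k A B C a b c :: real and w :: "nat \<Rightarrow> nat"
  assumes "k \<ge> 0"
    and "k_initial k (A, B, C)"
    and "k_initial 0 (a, b, c)"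
    and "reduced_inf w"
    and "\<forall>i\<in>{1,2,3::nat}. infinite {j. w j = i}"
  shows "\<exists>U. \<forall>j\<ge>1.
    (case Mseq k w j (A, B, C) of (X, Y, Z) \<Rightarrow>
     case Mseq 0 w j (a, b, c) of (x, y, z) \<Rightarrow>
       max (X / x) (max (Y / y) (Z / z)) \<le> U)"
proof -
  have pos: "a > 0" "b > 0" "c > 0" using assms(3) by (auto simp: k_initial_def)
  define L where "L = max ((A + k) / a) (max ((B + k) / b) ((C + k) / c))"
  have r: "(A + k) / a \<le> L" "(B + k) / b \<le> L" "(C + k) / c \<le> L"
    unfolding L_def by auto
  have i: "A + k \<le> L * a" "B + k \<le> L * b" "C + k \<le> L * c"
    using r pos by (auto simp: pos_divide_le_eq)
  show ?thesis
  proof (intro exI allI impI)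
    fix j :: nat
    obtain X Y Z where e1: "Mseq k w j (A, B, C) = (X, Y, Z)" by (metis prod_cases3)
    obtain x y z where e2: "Mseq 0 w j (a, b, c) = (x, y, z)" by (metis prod_cases3)
    have h: "X + k \<le> L * x" "Y + k \<le> L * y" "Z + k \<le> L * z" "x > 0" "y > 0" "z > 0"
      using key[OF assms(1) pos i, of w j] e1 e2 by auto
    have "X / x \<le> L" "Y / y \<le> L" "Z / z \<le> L"
      using h assms(1) by (auto simp: pos_divide_le_eq mult.commute)
    then show "case Mseq k w j (A, B, C) of (X, Y, Z) \<Rightarrow>
     case Mseq 0 w j (a, b, c) of (x, y, z) \<Rightarrow>
       max (X / x) (max (Y / y) (Z / z)) \<le> L" using e1 e2 by simp
  qed
qed

end
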